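(* Let $\mathcal A$ be a dual Banach algebra with predual $\mathcal A_*$. For $T\in\mathcal B(\mathcal A,\mathcal A')=(\mathcal A\hat\otimes\mathcal A)'$ define bounded maps $\phi_r,\phi_l:\mathcal A\hat\otimes\mathcal A\to\mathcal A'$ by $\phi_r(a\otimes b)=T'(\kappa_{\mathcal A}(a))\cdot b$ and $\phi_l(a\otimes b)=a\cdot T(b)$. Then $T\in\sigma WC(\mathcal B(\mathcal A,\mathcal A'))$ if and only if $\phi_r$ and $\phi_l$ are weakly compact and have ranges contained in $\kappa_{\mathcal A_*}(\mathcal A_* )$.
   Context: Dual Banach algebra $(\mathcal A,\mathcal A_* )$: $\mathcal A_*\subseteq\mathcal A'$ closed sub-bimodule (actions $\langle a\cdot\mu,b\rangle=\mu(ba)$, $\langle\mu\cdot a,b\rangle=\mu(ab)$) with $\mathcal A\cong(\mathcal A_* )'$ canonically; identify $\mathcal A=(\mathcal A_* )'$, $\mathcal A'=(\mathcal A_* )''$, with $\kappa_{\mathcal A_*}$ the canonical embedding of $\mathcal A_*$ in $\mathcal A'$. $(\mathcal A\hat\otimes\mathcal A)'=\mathcal B(\mathcal A,\mathcal A')$ via $\langle T,a\otimes b\rangle=\langle T(b),a\rangle$, bimodule actions $(a\cdot T)(c)=T(ca)$, $(T\cdot a)(c)=T(c)\cdot a$. $x\in\sigma WC(E)$ iff $a\mapsto a\cdot x$, $a\mapsto x\cdot a$ are $\sigma(\mathcal A,\mathcal A_* )$–$\sigma(E,E')$ continuous. *)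

theory Defs
  imports "HOL-Analysis.Analysis"
begin

definition weak_top :: "('v \<Rightarrow> real) set \<Rightarrow> 'v topology" where
  "weak_top F = topology_generated_by {f -` U | f U. f \<in> F \<and> open U}"

definition weak_top_full :: "'e::real_normed_vector topology" where
  "weak_top_full = weak_top (range (blinfun_apply :: ('e \<Rightarrow>\<^sub>L real) \<Rightarrow> 'e \<Rightarrow> real))"

definition lact_dual :: "'a::real_normed_algebra \<Rightarrow> ('a \<Rightarrow>\<^sub>L real) \<Rightarrow> ('a \<Rightarrow>\<^sub>L real)" where
  "lact_dual a \<mu> = Blinfun (\<lambda>b. \<mu> (b * a))"

definition ract_dual :: "('a \<Rightarrow>\<^sub>L real) \<Rightarrow> 'a::real_normed_algebra \<Rightarrow> ('a \<Rightarrow>\<^sub>L real)" where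
  "ract_dual \<mu> a = Blinfun (\<lambda>b. \<mu> (a * b))"

definition lact_op :: "'a::real_normed_algebra \<Rightarrow> ('a \<Rightarrow>\<^sub>L ('a \<Rightarrow>\<^sub>L real)) \<Rightarrow> ('a \<Rightarrow>\<^sub>L ('a \<Rightarrow>\<^sub>L real))" where
  "lact_op a T = Blinfun (\<lambda>c. T (c * a))"

definition ract_op :: "('a \<Rightarrow>\<^sub>L ('a \<Rightarrow>\<^sub>L real)) \<Rightarrow> 'a::real_normed_algebra \<Rightarrow> ('a \<Rightarrow>\<^sub>L ('a \<Rightarrow>\<^sub>L real))" where
  "ract_op T a = Blinfun (\<lambda>c. ract_dual (T c) a)"

(* Dual Banach algebra: P \<subseteq> A' is a closed sub-bimodule (the predual A_* ) and the
   canonical map A \<rightarrow> (A_* )', a \<mapsto> (\<mu> \<mapsto> \<mu> a), is an isometric isomorphism onto. *)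
definition dual_banach_algebra :: "('a::{real_normed_algebra,banach} \<Rightarrow>\<^sub>L real) set \<Rightarrow> bool" where
  "dual_banach_algebra P \<longleftrightarrow>
     subspace P \<and> closed P \<and>
     (\<forall>a. \<forall>\<mu>\<in>P. lact_dual a \<mu> \<in> P \<and> ract_dual \<mu> a \<in> P) \<and>
     (\<forall>a. norm a = (SUP \<mu>\<in>{\<mu>\<in>P. norm \<mu> \<le> 1}. \<bar>blinfun_apply \<mu> a\<bar>)) \<and>
     (\<forall>\<phi> :: ('a \<Rightarrow>\<^sub>L real) \<Rightarrow> real.
        (\<forall>x\<in>P. \<forall>y\<in>P. \<phi> (x + y) = \<phi> x + \<phi> y) \<and>
        (\<forall>c. \<forall>x\<in>P. \<phi> (c *\<^sub>R x) = c * \<phi> x) \<and>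
        (\<exists>K. \<forall>x\<in>P. \<bar>\<phi> x\<bar> \<le> K * norm x)
        \<longrightarrow> (\<exists>a. \<forall>\<mu>\<in>P. \<phi> \<mu> = blinfun_apply \<mu> a))"

definition weak_star_A :: "('a::real_normed_algebra \<Rightarrow>\<^sub>L real) set \<Rightarrow> 'a topology" where
  "weak_star_A P = weak_top (blinfun_apply ` P)"

definition sigmaWC_op :: "('a::{real_normed_algebra,banach} \<Rightarrow>\<^sub>L real) set \<Rightarrow> ('a \<Rightarrow>\<^sub>L ('a \<Rightarrow>\<^sub>L real)) set" where
  "sigmaWC_op P = {T. continuous_map (weak_star_A P) weak_top_full (\<lambda>a. lact_op a T) \<and>
                      continuous_map (weak_star_A P) weak_top_full (\<lambda>a. ract_op T a)}"

definition kappa :: "'a::real_normed_vector \<Rightarrow> (('a \<Rightarrow>\<^sub>L real) \<Rightarrow>\<^sub>L real)" where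
  "kappa a = Blinfun (\<lambda>\<mu>. blinfun_apply \<mu> a)"

definition adjoint_op :: "('a::real_normed_vector \<Rightarrow>\<^sub>L ('a \<Rightarrow>\<^sub>L real)) \<Rightarrow> (('a \<Rightarrow>\<^sub>L real) \<Rightarrow>\<^sub>L real) \<Rightarrow> ('a \<Rightarrow>\<^sub>L real)" where
  "adjoint_op T \<psi> = \<psi> o\<^sub>L T"

(* phi_r(a \<otimes> b) = T'(kappa a) . b   and   phi_l(a \<otimes> b) = a . T(b),
   given by their (bounded bilinear) values on elementary tensors *)
definition phi_r :: "('a::{real_normed_algebra,banach} \<Rightarrow>\<^sub>L ('a \<Rightarrow>\<^sub>L real)) \<Rightarrow> 'a \<Rightarrow> 'a \<Rightarrow> ('a \<Rightarrow>\<^sub>L real)" where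
  "phi_r T a b = ract_dual (adjoint_op T (kappa a)) b"

definition phi_l :: "('a::{real_normed_algebra,banach} \<Rightarrow>\<^sub>L ('a \<Rightarrow>\<^sub>L real)) \<Rightarrow> 'a \<Rightarrow> 'a \<Rightarrow> ('a \<Rightarrow>\<^sub>L real)" where
  "phi_l T a b = lact_dual a (T b)"

(* Weak compactness of the bounded linear map A \<otimes>^ A \<rightarrow> X induced by a bounded bilinear
   map B: the image of the unit ball of A \<otimes>^ A has weakly compact weak closure.
   The unit ball of A \<otimes>^ A is the norm closure of the absolutely convex hull of
   {a \<otimes> b : |a|,|b| \<le> 1}, so that weak closure equals the weak closure of the
   absolutely convex hull (= convex hull of S \<union> -S, real scalars) of
   S = {B a b : |a|,|b| \<le> 1}. *)
definition weakly_compact_bil :: "('a::real_normed_vector \<Rightarrow> 'a \<Rightarrow> 'x::real_normed_vector) \<Rightarrow> bool" where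
  "weakly_compact_bil B \<longleftrightarrow>
     (let S = {B a b | a b. norm a \<le> 1 \<and> norm b \<le> 1}
      in compactin weak_top_full (weak_top_full closure_of (convex hull (S \<union> uminus ` S))))"

end

theory Submission
  imports Defs
begin

lemma topspace_weak_top: "F \<noteq> {} \<Longrightarrow> topspace (weak_top F) = UNIV"
  unfolding weak_top_def topology_generated_by_topspace
  by (auto intro!: exI[of _ UNIV])

lemma openin_weak_top_gen: "g \<in> F \<Longrightarrow> open U \<Longrightarrow> openin (weak_top F) (g -` U)"
  unfolding weak_top_def openin_topology_generated_by_iff
  by (rule generate_topology_on.Basis) blast

lemma cont_weak_top_gen:
  assumes "g \<in> F" shows "continuous_map (weak_top F) euclideanreal g"
proof -
  have ne: "F \<noteq> {}" using assms by auto
  show ?thesis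
    unfolding continuous_map_def topspace_weak_top[OF ne]
    using openin_weak_top_gen[OF assms] by (auto simp: vimage_def)
qed

lemma cont_into_weak_top:
  assumes ne: "F \<noteq> {}" and H: "\<And>g. g \<in> F \<Longrightarrow> continuous_map X euclideanreal (g \<circ> f)"
  shows "continuous_map X (weak_top F) f"
  unfolding weak_top_def continuous_on_generated_topo_iff
proof (intro conjI allI impI)
  fix U assume "U \<in> {f -` U |f U. f \<in> F \<and> open U}"
  then obtain g V where gV: "U = g -` V" "g \<in> F" "open V" by blast
  have "openin X {x \<in> topspace X. (g \<circ> f) x \<in> V}"
    by (rule openin_continuous_map_preimage[OF H[OF gV(2)]]) (use gV in auto)
  moreover have "{x \<in> topspace X. (g \<circ> f) x \<in> V} = f -` U \<inter> topspace X" using gV by auto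
  ultimately show "openin X (f -` U \<inter> topspace X)" by simp
next
  obtain g where "g \<in> F" using ne by auto
  then show "f ` topspace X \<subseteq> \<Union> {f -` U |f U. f \<in> F \<and> open U}"
    by (auto intro!: exI[of _ "g -` UNIV"])
qed

lemma weak_top_basic_nbhd:
  assumes "openin (weak_top F) U" "x \<in> U"
  shows "\<exists>Fs e. finite Fs \<and> Fs \<subseteq> F \<and> e > 0 \<and> {y. \<forall>g\<in>Fs. \<bar>g y - g x\<bar> < e} \<subseteq> U"
proof -
  have "generate_topology_on {f -` U |f U. f \<in> F \<and> open U} U"
    using assms(1) unfolding weak_top_def openin_topology_generated_by_iff .
  then show ?thesis using assms(2)
  proof (induction arbitrary: x)
    case Empty then show ?case by (simp only: empty_iff)
  next
    case (Int a b)
    from Int.prems have xa: "x \<in> a" and xb: "x \<in> b" by auto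
    from Int.IH(1)[OF xa] obtain Fa ea where a: "finite Fa" "Fa \<subseteq> F" "ea > 0" "{y. \<forall>g\<in>Fa. \<bar>g y - g x\<bar> < ea} \<subseteq> a" by blast
    from Int.IH(2)[OF xb] obtain Fb eb where b: "finite Fb" "Fb \<subseteq> F" "eb > 0" "{y. \<forall>g\<in>Fb. \<bar>g y - g x\<bar> < eb} \<subseteq> b" by blast
    have "{y. \<forall>g\<in>Fa \<union> Fb. \<bar>g y - g x\<bar> < min ea eb} \<subseteq> a \<inter> b"
    proof
      fix y assume y: "y \<in> {y. \<forall>g\<in>Fa \<union> Fb. \<bar>g y - g x\<bar> < min ea eb}"
      have "y \<in> a" using a(4) y by auto
      moreover have "y \<in> b" using b(4) y by auto
      ultimately show "y \<in> a \<inter> b" by blast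
    qed
    moreover have "finite (Fa \<union> Fb)" "Fa \<union> Fb \<subseteq> F" "min ea eb > 0" using a b by auto
    ultimately show ?case by blast
  next
    case (UN K)
    then obtain k where "k \<in> K" "x \<in> k" by blast
    have "\<exists>Fs e. finite Fs \<and> Fs \<subseteq> F \<and> e > 0 \<and> {y. \<forall>g\<in>Fs. \<bar>g y - g x\<bar> < e} \<subseteq> k"
      by (rule UN.IH[OF \<open>k \<in> K\<close> \<open>x \<in> k\<close>])
    then obtain Fs e where "finite Fs" "Fs \<subseteq> F" "e > 0" "{y. \<forall>g\<in>Fs. \<bar>g y - g x\<bar> < e} \<subseteq> k" by blast
    moreover have "k \<subseteq> \<Union>K" using \<open>k \<in> K\<close> by blast
    ultimately show ?case by (meson order_trans)
  next
    case (Basis s)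
    then obtain g V where gV: "s = g -` V" "g \<in> F" "open V" by blast
    with Basis.prems have "g x \<in> V" by auto
    then obtain e where e: "e > 0" "ball (g x) e \<subseteq> V" using gV(3) open_contains_ball by blast
    have "{y. \<forall>h\<in>{g}. \<bar>h y - h x\<bar> < e} \<subseteq> s"
    proof
      fix y assume "y \<in> {y. \<forall>h\<in>{g}. \<bar>h y - h x\<bar> < e}"
      then have "g y \<in> ball (g x) e" by (simp add: dist_real_def abs_minus_commute)
      then show "y \<in> s" using e gV by auto
    qed
    moreover have "finite {g}" "{g} \<subseteq> F" using gV by auto
    ultimately show ?case using e by blast
  qed
qed

lemma kernel_span:
  fixes M :: "('v::real_normed_vector \<Rightarrow>\<^sub>L real) set" and f :: "'v \<Rightarrow>\<^sub>L real"
  assumes "finite M"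
  shows "(\<And>x. (\<forall>\<mu>\<in>M. \<mu> x = 0) \<Longrightarrow> f x = 0) \<Longrightarrow> f \<in> span M"
  using assms(1)
proof (induction M arbitrary: f rule: finite_induct)
  case empty
  then have "f = 0" by (intro blinfun_eqI) simp
  then show ?case by (simp add: span_zero)
next
  case (insert \<mu> M)
  show ?case
  proof (cases "\<forall>x. (\<forall>\<nu>\<in>M. \<nu> x = 0) \<longrightarrow> \<mu> x = 0")
    case True
    have "f \<in> span M"
      by (rule insert.IH) (use True insert.prems in auto)
    then show ?thesis by (meson span_mono subset_insertI subsetD)
  next
    case False
    then obtain x0 where x0: "\<forall>\<nu>\<in>M. \<nu> x0 = 0" "\<mu> x0 \<noteq> 0" by blast
    define x1 where "x1 = x0 /\<^sub>R \<mu> x0"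
    have x1: "\<forall>\<nu>\<in>M. \<nu> x1 = 0" "\<mu> x1 = 1"
      using x0 by (auto simp: x1_def blinfun.scaleR_right)
    define g where "g = f - f x1 *\<^sub>R \<mu>"
    have "g \<in> span M"
    proof (rule insert.IH)
      fix x assume x: "\<forall>\<nu>\<in>M. \<nu> x = 0"
      define y where "y = x - \<mu> x *\<^sub>R x1"
      have "\<forall>\<nu>\<in>insert \<mu> M. \<nu> y = 0"
        using x x1 by (auto simp: y_def blinfun.diff_right blinfun.scaleR_right)
      then have "f y = 0" by (rule insert.prems)
      then have "f x = \<mu> x * f x1"
        by (simp add: y_def blinfun.diff_right blinfun.scaleR_right)
      then show "g x = 0" by (simp add: g_def blinfun.diff_left blinfun.scaleR_left)
    qed
    then have "g \<in> span (insert \<mu> M)" by (meson span_mono subset_insertI subsetD)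
    moreover have "f x1 *\<^sub>R \<mu> \<in> span (insert \<mu> M)"
      by (intro span_mul span_base) simp
    ultimately have "g + f x1 *\<^sub>R \<mu> \<in> span (insert \<mu> M)" by (rule span_add)
    then show ?thesis by (simp add: g_def)
  qed
qed

definition sublin :: "('v::real_vector \<Rightarrow> real) \<Rightarrow> bool" where
  "sublin p \<longleftrightarrow> (\<forall>x y. p (x + y) \<le> p x + p y) \<and> (\<forall>c x. c \<ge> 0 \<longrightarrow> p (c *\<^sub>R x) = c * p x)"

definition goodg :: "('v::real_vector \<Rightarrow> real) \<Rightarrow> ('v \<times> real) set \<Rightarrow> bool" where
  "goodg p H \<longleftrightarrow> subspace H \<and> (\<forall>x y z. (x,y) \<in> H \<longrightarrow> (x,z) \<in> H \<longrightarrow> y = z) \<and> (\<forall>x y. (x,y) \<in> H \<longrightarrow> y \<le> p x)"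

lemma chain_union_good:
  assumes C: "C \<in> chains {H. goodg p H \<and> H0 \<subseteq> H}" and ne: "C \<noteq> {}"
  shows "goodg p (\<Union>C) \<and> H0 \<subseteq> \<Union>C"
proof -
  have CA: "\<And>H. H \<in> C \<Longrightarrow> goodg p H \<and> H0 \<subseteq> H" using C by (auto simp: chains_def)
  have ch: "\<And>A B. A \<in> C \<Longrightarrow> B \<in> C \<Longrightarrow> A \<subseteq> B \<or> B \<subseteq> A" using C by (auto simp: chains_def chain_subset_def)
  have two: "\<exists>H\<in>C. u \<in> H \<and> v \<in> H" if uv: "u \<in> \<Union>C" "v \<in> \<Union>C" for u v
  proof -
    obtain A B where "A \<in> C" "B \<in> C" "u \<in> A" "v \<in> B" using uv by blast
    then show ?thesis using ch[of A B] by blast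
  qed
  obtain H1 where H1: "H1 \<in> C" using ne by blast
  have "subspace (\<Union>C)"
  proof (rule subspaceI)
    show "0 \<in> \<Union>C" using H1 CA[OF H1] by (auto simp: goodg_def dest: subspace_0)
  next
    fix u v assume "u \<in> \<Union>C" "v \<in> \<Union>C"
    then obtain H where "H \<in> C" "u \<in> H" "v \<in> H" using two by blast
    then show "u + v \<in> \<Union>C" using CA[of H] by (auto simp: goodg_def dest: subspace_add)
  next
    fix c u assume "u \<in> \<Union>C"
    then obtain H where "H \<in> C" "u \<in> H" by blast
    then show "c *\<^sub>R u \<in> \<Union>C" using CA[of H] by (auto simp: goodg_def dest: subspace_scale)
  qed
  moreover have "\<forall>x y z. (x,y) \<in> \<Union>C \<longrightarrow> (x,z) \<in> \<Union>C \<longrightarrow> y = z"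
  proof (intro allI impI)
    fix x y z assume "(x,y) \<in> \<Union>C" "(x,z) \<in> \<Union>C"
    then obtain H where "H \<in> C" "(x,y) \<in> H" "(x,z) \<in> H" using two by blast
    then show "y = z" using CA[of H] by (auto simp: goodg_def)
  qed
  moreover have "\<forall>x y. (x,y) \<in> \<Union>C \<longrightarrow> y \<le> p x"
    using CA by (auto simp: goodg_def)
  moreover have "H0 \<subseteq> \<Union>C" using H1 CA[OF H1] by blast
  ultimately show ?thesis by (simp add: goodg_def)
qed

lemma sublin_scale_pos: "sublin p \<Longrightarrow> c \<ge> 0 \<Longrightarrow> p (c *\<^sub>R x) = c * p x"
  by (simp add: sublin_def)

lemma sublin_add: "sublin p \<Longrightarrow> p (x + y) \<le> p x + p y"
  by (simp add: sublin_def)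

lemma extend_step:
  assumes p: "sublin p" and M: "goodg p M" and z: "z \<notin> fst ` M"
  shows "\<exists>M'. goodg p M' \<and> M \<subseteq> M' \<and> M' \<noteq> M"
proof -
  have sM: "subspace M" using M by (simp add: goodg_def)
  have sv: "\<And>x y z. (x,y) \<in> M \<Longrightarrow> (x,z) \<in> M \<Longrightarrow> y = z" using M by (simp add: goodg_def)
  have dom: "\<And>x y. (x,y) \<in> M \<Longrightarrow> y \<le> p x" using M by (simp add: goodg_def)
  have M0: "(0,0) \<in> M" using subspace_0[OF sM] by (simp add: zero_prod_def)
  define L where "L = {y - p (x - z) | x y. (x,y) \<in> M}"
  have Lbound: "l \<le> p (x' + z) - y'" if "l \<in> L" "(x',y') \<in> M" for l x' y'
  proof -
    obtain x y where l: "l = y - p (x - z)" "(x,y) \<in> M" using \<open>l \<in> L\<close> by (auto simp: L_def)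
    have "(x + x', y + y') \<in> M" using subspace_add[OF sM l(2) that(2)] by simp
    then have "y + y' \<le> p (x + x')" by (rule dom)
    also have "x + x' = (x - z) + (x' + z)" by simp
    also have "p \<dots> \<le> p (x - z) + p (x' + z)" by (rule sublin_add[OF p])
    finally show ?thesis using l by simp
  qed
  have Lne: "L \<noteq> {}" using M0 by (auto simp: L_def)
  have Lbdd: "bdd_above L" by (rule bdd_aboveI[where M="p z"]) (use Lbound[OF _ M0] in simp)
  define c where "c = Sup L"
  have c1: "y - p (x - z) \<le> c" if "(x,y) \<in> M" for x y
    unfolding c_def by (rule cSup_upper[OF _ Lbdd]) (use that in \<open>auto simp: L_def\<close>)
  have c2: "c \<le> p (x + z) - y" if "(x,y) \<in> M" for x y
    unfolding c_def by (rule cSup_least[OF Lne]) (use Lbound that in auto)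
  define M' where "M' = {(x + t *\<^sub>R z, y + t * c) | x y t. (x,y) \<in> M}"
  have "subspace M'"
  proof (rule subspaceI)
    show "0 \<in> M'" unfolding M'_def using M0 by (auto simp: zero_prod_def intro!: exI[of _ 0])
  next
    fix u v assume "u \<in> M'" "v \<in> M'"
    then obtain x1 y1 t1 x2 y2 t2 where u: "u = (x1 + t1 *\<^sub>R z, y1 + t1 * c)" "(x1,y1) \<in> M"
      and v: "v = (x2 + t2 *\<^sub>R z, y2 + t2 * c)" "(x2,y2) \<in> M" by (auto simp: M'_def)
    have "(x1 + x2, y1 + y2) \<in> M" using subspace_add[OF sM u(2) v(2)] by simp
    moreover have "u + v = ((x1 + x2) + (t1 + t2) *\<^sub>R z, (y1 + y2) + (t1 + t2) * c)"
      using u v by (simp add: algebra_simps)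
    ultimately show "u + v \<in> M'" unfolding M'_def by blast
  next
    fix a u assume "u \<in> M'"
    then obtain x1 y1 t1 where u: "u = (x1 + t1 *\<^sub>R z, y1 + t1 * c)" "(x1,y1) \<in> M" by (auto simp: M'_def)
    have "(a *\<^sub>R x1, a * y1) \<in> M" using subspace_scale[OF sM u(2), of a] by simp
    moreover have "a *\<^sub>R u = (a *\<^sub>R x1 + (a * t1) *\<^sub>R z, a * y1 + (a * t1) * c)"
      using u by (simp add: algebra_simps)
    ultimately show "a *\<^sub>R u \<in> M'" unfolding M'_def by blast
  qed
  moreover have "\<forall>x y w. (x,y) \<in> M' \<longrightarrow> (x,w) \<in> M' \<longrightarrow> y = w"
  proof (intro allI impI)
    fix x y w assume xy: "(x,y) \<in> M'" and xw: "(x,w) \<in> M'"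
    obtain x1 y1 t1 where u: "x = x1 + t1 *\<^sub>R z" "y = y1 + t1 * c" "(x1,y1) \<in> M"
      using xy by (auto simp: M'_def)
    obtain x2 y2 t2 where v: "x = x2 + t2 *\<^sub>R z" "w = y2 + t2 * c" "(x2,y2) \<in> M"
      using xw by (auto simp: M'_def)
    have d: "(x1 - x2, y1 - y2) \<in> M" using subspace_diff[OF sM u(3) v(3)] by simp
    have eq: "x1 - x2 = (t2 - t1) *\<^sub>R z" using u(1) v(1) by (simp add: algebra_simps)
    have "t1 = t2"
    proof (rule ccontr)
      assume "t1 \<noteq> t2"
      then have "z = (1 / (t2 - t1)) *\<^sub>R (x1 - x2)" using eq by simp
      moreover have "((1 / (t2 - t1)) *\<^sub>R (x1 - x2), (1 / (t2 - t1)) * (y1 - y2)) \<in> M"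
        using subspace_scale[OF sM d, of "1 / (t2 - t1)"] by simp
      ultimately have "z \<in> fst ` M" by force
      with z show False by simp
    qed
    then have "x1 = x2" using eq by simp
    then have "y1 = y2" using sv u(3) v(3) by blast
    then show "y = w" using u v \<open>t1 = t2\<close> by simp
  qed
  moreover have "\<forall>x y. (x,y) \<in> M' \<longrightarrow> y \<le> p x"
  proof (intro allI impI)
    fix x' y' assume "(x',y') \<in> M'"
    then obtain x y t where u: "x' = x + t *\<^sub>R z" "y' = y + t * c" "(x,y) \<in> M" by (auto simp: M'_def)
    consider "t = 0" | "t > 0" | "t < 0" by linarith
    then show "y' \<le> p x'"
    proof cases
      case 1 then show ?thesis using dom[OF u(3)] u by simp
    next
      case 2
      have "((1/t) *\<^sub>R x, (1/t) * y) \<in> M" using subspace_scale[OF sM u(3), of "1/t"] by simp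
      from c2[OF this] have "t * c \<le> t * (p ((1/t) *\<^sub>R x + z) - (1/t) * y)"
        using 2 by (simp add: mult_left_mono)
      also have "\<dots> = t * p ((1/t) *\<^sub>R x + z) - y" using 2 by (simp add: algebra_simps)
      also have "t * p ((1/t) *\<^sub>R x + z) = p (t *\<^sub>R ((1/t) *\<^sub>R x + z))"
        using sublin_scale_pos[OF p, of t] 2 by simp
      also have "t *\<^sub>R ((1/t) *\<^sub>R x + z) = x + t *\<^sub>R z" using 2 by (simp add: algebra_simps)
      finally show ?thesis using u by simp
    next
      case 3
      define s where "s = - t"
      have s: "s > 0" using 3 by (simp add: s_def)
      have "((1/s) *\<^sub>R x, (1/s) * y) \<in> M" using subspace_scale[OF sM u(3), of "1/s"] by simp
      from c1[OF this] have "s * ((1/s) * y - p ((1/s) *\<^sub>R x - z)) \<le> s * c"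
        using s by (simp add: mult_left_mono)
      moreover have "s * ((1/s) * y - p ((1/s) *\<^sub>R x - z)) = y - s * p ((1/s) *\<^sub>R x - z)"
        using s by (simp add: algebra_simps)
      moreover have "s * p ((1/s) *\<^sub>R x - z) = p (s *\<^sub>R ((1/s) *\<^sub>R x - z))"
        using sublin_scale_pos[OF p, of s] s by simp
      moreover have "s *\<^sub>R ((1/s) *\<^sub>R x - z) = x + t *\<^sub>R z" using s by (simp add: algebra_simps s_def)
      ultimately show ?thesis using u by (simp add: s_def)
    qed
  qed
  ultimately have "goodg p M'" by (simp add: goodg_def)
  moreover have "M \<subseteq> M'"
  proof
    fix u assume "u \<in> M"
    then obtain x y where "u = (x,y)" "(x,y) \<in> M" by (cases u) auto
    moreover have "u = (x + 0 *\<^sub>R z, y + 0 * c)" using \<open>u = (x,y)\<close> by simp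
    ultimately show "u \<in> M'" unfolding M'_def by blast
  qed
  moreover have "(z, c) \<in> M'"
  proof -
    have "(z, c) = (0 + 1 *\<^sub>R z, 0 + 1 * c)" by simp
    then show ?thesis unfolding M'_def using M0 by blast
  qed
  then have "M' \<noteq> M" using z by force
  ultimately show ?thesis by blast
qed

theorem hahn_banach_alg:
  assumes p: "sublin p" and H0: "goodg p H0"
  shows "\<exists>f. linear f \<and> (\<forall>x. f x \<le> p x) \<and> (\<forall>x y. (x,y) \<in> H0 \<longrightarrow> f x = y)"
proof -
  define A where "A = {H. goodg p H \<and> H0 \<subseteq> H}"
  have "\<forall>C\<in>chains A. \<exists>U\<in>A. \<forall>X\<in>C. X \<subseteq> U"
  proof
    fix C assume C: "C \<in> chains A"
    show "\<exists>U\<in>A. \<forall>X\<in>C. X \<subseteq> U"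
    proof (cases "C = {}")
      case True then show ?thesis using H0 by (auto simp: A_def)
    next
      case False
      then have "\<Union>C \<in> A" using chain_union_good[of C p H0] C by (simp add: A_def)
      then show ?thesis by blast
    qed
  qed
  from Zorn_Lemma2[OF this] obtain M where M: "M \<in> A" and max: "\<forall>X\<in>A. M \<subseteq> X \<longrightarrow> X = M" by blast
  have gM: "goodg p M" and H0M: "H0 \<subseteq> M" using M by (auto simp: A_def)
  have full: "x \<in> fst ` M" for x
  proof (rule ccontr)
    assume "x \<notin> fst ` M"
    from extend_step[OF p gM this] obtain M' where "goodg p M'" "M \<subseteq> M'" "M' \<noteq> M" by blast
    moreover have "M' \<in> A" using \<open>goodg p M'\<close> \<open>M \<subseteq> M'\<close> H0M by (auto simp: A_def)
    ultimately show False using max by blast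
  qed
  have sM: "subspace M" and sv: "\<And>x y z. (x,y) \<in> M \<Longrightarrow> (x,z) \<in> M \<Longrightarrow> y = z"
    and dom: "\<And>x y. (x,y) \<in> M \<Longrightarrow> y \<le> p x" using gM by (auto simp: goodg_def)
  define f where "f x = (THE y. (x,y) \<in> M)" for x
  have fM: "(x, f x) \<in> M" for x
  proof -
    obtain y where "(x,y) \<in> M" using full[of x] by force
    then have "(THE y. (x,y) \<in> M) = y" using sv by blast
    then show ?thesis using \<open>(x,y) \<in> M\<close> by (simp add: f_def)
  qed
  have funiq: "(x,y) \<in> M \<Longrightarrow> f x = y" for x y using sv fM by blast
  have "linear f"
  proof (rule linearI)
    fix x y show "f (x + y) = f x + f y"
      using subspace_add[OF sM fM[of x] fM[of y]] by (intro funiq) simp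
  next
    fix c x show "f (c *\<^sub>R x) = c *\<^sub>R f x"
      using subspace_scale[OF sM fM[of x], of c] by (intro funiq) simp
  qed
  moreover have "\<forall>x. f x \<le> p x" using dom fM by blast
  moreover have "\<forall>x y. (x,y) \<in> H0 \<longrightarrow> f x = y" using H0M funiq by blast
  ultimately show ?thesis by blast
qed

lemma linear_bdd_blinfun:
  fixes f :: "'v::real_normed_vector \<Rightarrow> real"
  assumes "linear f" "\<And>x. \<bar>f x\<bar> \<le> K * norm x"
  shows "blinfun_apply (Blinfun f) = f"
proof -
  have "bounded_linear f"
  proof (rule bounded_linear_intro[where K=K])
    show "f (x + y) = f x + f y" for x y using assms(1) by (simp add: linear_add)
    show "f (r *\<^sub>R x) = r *\<^sub>R f x" for r x using assms(1) by (simp add: linear_scale)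
    show "norm (f x) \<le> norm x * K" for x using assms(2)[of x] by (simp add: mult.commute)
  qed
  then show ?thesis by (rule bounded_linear_Blinfun_apply)
qed

lemma topspace_weak_top_full [simp]: "topspace (weak_top_full :: 'w::real_normed_vector topology) = UNIV"
  unfolding weak_top_full_def by (rule topspace_weak_top) simp

lemma openin_weak_top_full_blinfun:
  fixes \<Psi> :: "'w::real_normed_vector \<Rightarrow>\<^sub>L real"
  shows "open U \<Longrightarrow> openin weak_top_full (blinfun_apply \<Psi> -` U)"
  unfolding weak_top_full_def by (rule openin_weak_top_gen) auto

lemma mazur:
  fixes P :: "'w::real_normed_vector set"
  assumes sP: "subspace P" and cP: "closed P"
  shows "closedin weak_top_full P"
  unfolding closedin_def topspace_weak_top_full
proof (intro conjI)
  show "openin weak_top_full (UNIV - P)"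
  proof (subst openin_subopen, intro ballI)
    fix x assume "x \<in> UNIV - P"
    then have xP: "x \<notin> P" by simp
    have Pne: "P \<noteq> {}" using subspace_0[OF sP] by blast
    define d where "d = infdist x P"
    have d: "d > 0" using in_closed_iff_infdist_zero[OF cP Pne, of x] xP infdist_nonneg[of x P]
      by (simp add: d_def)
    define p where "p y = norm y / d" for y :: 'w
    have sp: "sublin p"
      unfolding sublin_def p_def using d
      by (auto simp: divide_right_mono norm_triangle_ineq add_divide_distrib[symmetric])
    define H0 where "H0 = {(q + t *\<^sub>R x, t) | q t. q \<in> P}"
    have gH0: "goodg p H0"
      unfolding goodg_def
    proof (intro conjI)
      show "subspace H0"
      proof (rule subspaceI)
        have "(0::'w \<times> real) = (0 + 0 *\<^sub>R x, 0)" by (simp add: zero_prod_def)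
        then show "0 \<in> H0" unfolding H0_def using subspace_0[OF sP] by blast
      next
        fix u v assume "u \<in> H0" "v \<in> H0"
        then obtain q1 t1 q2 t2 where "u = (q1 + t1 *\<^sub>R x, t1)" "q1 \<in> P" "v = (q2 + t2 *\<^sub>R x, t2)" "q2 \<in> P"
          unfolding H0_def by blast
        moreover then have "u + v = ((q1 + q2) + (t1 + t2) *\<^sub>R x, t1 + t2)" by (simp add: algebra_simps)
        ultimately show "u + v \<in> H0" unfolding H0_def using subspace_add[OF sP] by blast
      next
        fix c u assume "u \<in> H0"
        then obtain q1 t1 where "u = (q1 + t1 *\<^sub>R x, t1)" "q1 \<in> P" unfolding H0_def by blast
        moreover then have "c *\<^sub>R u = (c *\<^sub>R q1 + (c * t1) *\<^sub>R x, c * t1)" by (simp add: algebra_simps)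
        ultimately show "c *\<^sub>R u \<in> H0" unfolding H0_def using subspace_scale[OF sP] by blast
      qed
    next
      show "\<forall>y a b. (y, a) \<in> H0 \<longrightarrow> (y, b) \<in> H0 \<longrightarrow> a = b"
      proof (intro allI impI)
        fix y a b assume ya: "(y, a) \<in> H0" and yb: "(y, b) \<in> H0"
        obtain q1 where q1: "y = q1 + a *\<^sub>R x" "q1 \<in> P" using ya unfolding H0_def by blast
        obtain q2 where q2: "y = q2 + b *\<^sub>R x" "q2 \<in> P" using yb unfolding H0_def by blast
        show "a = b"
        proof (rule ccontr)
          assume ab: "a \<noteq> b"
          have "(b - a) *\<^sub>R x = q1 - q2" using q1 q2 by (simp add: algebra_simps)
          moreover have "x = (1 / (b - a)) *\<^sub>R ((b - a) *\<^sub>R x)" using ab by simp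
          ultimately have "x = (1 / (b - a)) *\<^sub>R (q1 - q2)" by simp
          moreover have "(1 / (b - a)) *\<^sub>R (q1 - q2) \<in> P"
            using subspace_scale[OF sP subspace_diff[OF sP q1(2) q2(2)]] by blast
          ultimately show False using xP by simp
        qed
      qed
    next
      show "\<forall>y t. (y, t) \<in> H0 \<longrightarrow> t \<le> p y"
      proof (intro allI impI)
        fix y t assume "(y, t) \<in> H0"
        then obtain q where q: "y = q + t *\<^sub>R x" "q \<in> P" unfolding H0_def by blast
        show "t \<le> p y"
        proof (cases "t > 0")
          case False
          have "0 \<le> norm y / d" using d by simp
          then show ?thesis using False by (simp add: p_def)
        next
          case True
          have "- ((1/t) *\<^sub>R q) \<in> P" using q(2) sP by (simp add: subspace_neg subspace_scale)
          then have "d \<le> dist x (- ((1/t) *\<^sub>R q))" unfolding d_def by (rule infdist_le)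
          also have "dist x (- ((1/t) *\<^sub>R q)) = norm ((1/t) *\<^sub>R y)"
            using True by (simp add: dist_norm q(1) algebra_simps)
          also have "\<dots> = norm y / t" using True by simp
          finally have "d * t \<le> norm y" using True by (simp add: field_simps)
          then show ?thesis using d by (simp add: p_def field_simps mult.commute)
        qed
      qed
    qed
    from hahn_banach_alg[OF sp gH0] obtain f where f: "linear f" "\<forall>y. f y \<le> p y"
      "\<forall>y t. (y, t) \<in> H0 \<longrightarrow> f y = t" by blast
    have fx: "f x = 1"
    proof -
      have "(0 + 1 *\<^sub>R x, 1) \<in> H0" unfolding H0_def using subspace_0[OF sP] by blast
      then show ?thesis using f(3) by simp
    qed
    have fP: "f q = 0" if "q \<in> P" for q
    proof -
      have "(q + 0 *\<^sub>R x, 0) \<in> H0" unfolding H0_def using that by blast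
      then show ?thesis using f(3) by simp
    qed
    have fb: "\<bar>f y\<bar> \<le> (1/d) * norm y" for y
    proof -
      have "f y \<le> norm y / d" using f(2) by (simp add: p_def)
      moreover have "- f y \<le> norm y / d" using f(2)[rule_format, of "- y"] linear_neg[OF f(1)]
        by (simp add: p_def)
      ultimately show ?thesis by simp
    qed
    define \<Psi> where "\<Psi> = Blinfun f"
    have \<Psi>: "blinfun_apply \<Psi> = f" unfolding \<Psi>_def by (rule linear_bdd_blinfun[OF f(1) fb])
    show "\<exists>T. openin weak_top_full T \<and> x \<in> T \<and> T \<subseteq> UNIV - P"
    proof (intro exI conjI)
      show "openin weak_top_full (blinfun_apply \<Psi> -` {1/2<..})"
        by (rule openin_weak_top_full_blinfun) simp
      show "x \<in> blinfun_apply \<Psi> -` {1/2<..}" using fx \<Psi> by simp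
      show "blinfun_apply \<Psi> -` {1/2<..} \<subseteq> UNIV - P" using fP \<Psi> by auto
    qed
  qed
qed simp

lemma closedin_prod_eq:
  fixes a b :: "('e \<Rightarrow> real) \<Rightarrow> real"
  assumes "continuous_map (product_topology (\<lambda>_. euclideanreal) UNIV) euclideanreal a"
    "continuous_map (product_topology (\<lambda>_. euclideanreal) UNIV) euclideanreal b"
  shows "closedin (product_topology (\<lambda>_. euclideanreal) UNIV) {h. a h = b h}"
proof -
  have "closedin (product_topology (\<lambda>_. euclideanreal) UNIV)
          {h \<in> topspace (product_topology (\<lambda>_. euclideanreal) UNIV). (\<lambda>h. a h - b h) h \<in> {0}}"
    by (rule closedin_continuous_map_preimage) (use assms in \<open>auto intro!: continuous_intros\<close>)
  then show ?thesis by simp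
qed

lemma alaoglu:
  "compactin (weak_top (range (\<lambda>y (\<psi>::'e::real_normed_vector \<Rightarrow>\<^sub>L real). blinfun_apply \<psi> y)))
             {\<psi>. norm \<psi> \<le> 1}"
proof -
  let ?PT = "product_topology (\<lambda>_. euclideanreal) (UNIV::'e set)"
  let ?W = "weak_top (range (\<lambda>y (\<psi>::'e \<Rightarrow>\<^sub>L real). blinfun_apply \<psi> y))"
  define Q where "Q = PiE (UNIV::'e set) (\<lambda>y. cball (0::real) (norm y))"
  have cQ: "compactin ?PT Q" unfolding Q_def
    by (subst compactin_PiE) simp
  have proj: "continuous_map ?PT euclideanreal (\<lambda>h. h y)" for y
    by (rule continuous_map_product_projection) simp
  define L1 :: "('e \<Rightarrow> real) set" where "L1 = (\<Inter>xy::'e\<times>'e. {h. h (fst xy + snd xy) = h (fst xy) + h (snd xy)})"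
  define L2 :: "('e \<Rightarrow> real) set" where "L2 = (\<Inter>cx::real\<times>'e. {h. h (fst cx *\<^sub>R snd cx) = fst cx * h (snd cx)})"
  have cL1: "closedin ?PT L1" unfolding L1_def
    by (rule closedin_Inter) (auto intro!: closedin_prod_eq continuous_intros proj)
  have cL2: "closedin ?PT L2" unfolding L2_def
    by (rule closedin_Inter) (auto intro!: closedin_prod_eq continuous_intros proj)
  define K0 where "K0 = Q \<inter> (L1 \<inter> L2)"
  have cK0: "compactin ?PT K0" unfolding K0_def
    by (rule compact_Int_closedin[OF cQ]) (use cL1 cL2 in auto)
  have K0_bl: "bounded_linear h" if "h \<in> K0" for h
  proof (rule bounded_linear_intro[where K=1])
    show "h (x + y) = h x + h y" for x y using that unfolding K0_def L1_def by auto
    show "h (r *\<^sub>R x) = r *\<^sub>R h x" for r x using that unfolding K0_def L2_def by auto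
    show "norm (h x) \<le> norm x * 1" for x using that unfolding K0_def Q_def by (auto simp: PiE_iff)
  qed
  have cont: "continuous_map (subtopology ?PT K0) ?W (\<lambda>h. Blinfun h)"
  proof (rule cont_into_weak_top)
    show "range (\<lambda>y (\<psi>::'e \<Rightarrow>\<^sub>L real). blinfun_apply \<psi> y) \<noteq> {}" by simp
  next
    fix g assume "g \<in> range (\<lambda>y (\<psi>::'e \<Rightarrow>\<^sub>L real). blinfun_apply \<psi> y)"
    then obtain y where g: "g = (\<lambda>\<psi>. blinfun_apply \<psi> y)" by blast
    have "continuous_map (subtopology ?PT K0) euclideanreal (\<lambda>h. h y)"
      by (rule continuous_map_from_subtopology[OF proj])
    then show "continuous_map (subtopology ?PT K0) euclideanreal (g \<circ> (\<lambda>h. Blinfun h))"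
      by (rule continuous_map_eq) (auto simp: g bounded_linear_Blinfun_apply[OF K0_bl])
  qed
  have "compactin ?W ((\<lambda>h. Blinfun h) ` K0)"
    by (rule image_compactin[OF _ cont]) (simp add: compactin_subtopology cK0)
  moreover have "(\<lambda>h. Blinfun h) ` K0 = {\<psi>. norm \<psi> \<le> 1}"
  proof (intro equalityI subsetI)
    fix \<psi> assume "\<psi> \<in> (\<lambda>h. Blinfun h) ` K0"
    then obtain h where h: "h \<in> K0" "\<psi> = Blinfun h" by blast
    have "norm \<psi> \<le> 1"
      unfolding h(2)
    proof (rule norm_blinfun_bound)
      fix x show "norm (blinfun_apply (Blinfun h) x) \<le> 1 * norm x"
        using h(1) unfolding bounded_linear_Blinfun_apply[OF K0_bl[OF h(1)]] K0_def Q_def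
        by (auto simp: PiE_iff)
    qed simp
    then show "\<psi> \<in> {\<psi>. norm \<psi> \<le> 1}" by simp
  next
    fix \<psi> :: "'e \<Rightarrow>\<^sub>L real" assume "\<psi> \<in> {\<psi>. norm \<psi> \<le> 1}"
    then have n: "norm \<psi> \<le> 1" by simp
    have "blinfun_apply \<psi> \<in> K0"
      unfolding K0_def Q_def L1_def L2_def
    proof (intro IntI)
      show "blinfun_apply \<psi> \<in> PiE UNIV (\<lambda>y. cball 0 (norm y))"
      proof (simp add: PiE_iff, intro allI)
        fix y
        have "\<bar>blinfun_apply \<psi> y\<bar> \<le> norm \<psi> * norm y" using norm_blinfun[of \<psi> y] by simp
        also have "\<dots> \<le> norm y" using n by (simp add: mult_left_le_one_le)
        finally show "\<bar>blinfun_apply \<psi> y\<bar> \<le> norm y" .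
      qed
    qed (auto simp: blinfun.add_right blinfun.scaleR_right)
    moreover have "\<psi> = Blinfun (blinfun_apply \<psi>)" by (simp add: blinfun_apply_inverse)
    ultimately show "\<psi> \<in> (\<lambda>h. Blinfun h) ` K0" by blast
  qed
  ultimately show ?thesis by simp
qed

lemma hausdorff_weak_top:
  assumes sep: "\<And>x y. x \<noteq> y \<Longrightarrow> \<exists>g\<in>F. g x \<noteq> g y" and ne: "F \<noteq> {}"
  shows "Hausdorff_space (weak_top F)"
  unfolding Hausdorff_space_def
proof (intro allI impI)
  fix x y assume "x \<in> topspace (weak_top F) \<and> y \<in> topspace (weak_top F) \<and> x \<noteq> y"
  then obtain g where g: "g \<in> F" "g x \<noteq> g y" using sep by blast
  define r where "r = \<bar>g x - g y\<bar> / 2"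
  have r: "r > 0" using g by (simp add: r_def)
  show "\<exists>U V. openin (weak_top F) U \<and> openin (weak_top F) V \<and> x \<in> U \<and> y \<in> V \<and> disjnt U V"
  proof (intro exI conjI)
    show "openin (weak_top F) (g -` ball (g x) r)" by (rule openin_weak_top_gen[OF g(1)]) simp
    show "openin (weak_top F) (g -` ball (g y) r)" by (rule openin_weak_top_gen[OF g(1)]) simp
    show "x \<in> g -` ball (g x) r" using r by simp
    show "y \<in> g -` ball (g y) r" using r by simp
    show "disjnt (g -` ball (g x) r) (g -` ball (g y) r)"
      unfolding disjnt_def
    proof (rule ccontr)
      assume "g -` ball (g x) r \<inter> g -` ball (g y) r \<noteq> {}"
      then obtain z where z1: "dist (g x) (g z) < r" and z2: "dist (g y) (g z) < r" by auto
      have "\<bar>(g x - g z) - (g y - g z)\<bar> \<le> \<bar>g x - g z\<bar> + \<bar>g y - g z\<bar>" by (rule abs_triangle_ineq4)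
      then have "\<bar>g x - g y\<bar> \<le> dist (g x) (g z) + dist (g y) (g z)" by (simp add: dist_real_def)
      with z1 z2 have "\<bar>g x - g y\<bar> < 2 * r" by linarith
      then show False unfolding r_def by simp
    qed
  qed
qed

lemma kappa_apply: "blinfun_apply (kappa a) = (\<lambda>\<mu>. blinfun_apply \<mu> a)"
  unfolding kappa_def by (rule bounded_linear_Blinfun_apply) (rule blinfun.bounded_linear_left)

lemma hausdorff_weak_top_full_dual:
  "Hausdorff_space (weak_top_full :: ('a::real_normed_vector \<Rightarrow>\<^sub>L real) topology)"
  unfolding weak_top_full_def
proof (rule hausdorff_weak_top)
  fix x y :: "'a \<Rightarrow>\<^sub>L real" assume "x \<noteq> y"
  then obtain a where "x a \<noteq> y a" by (meson blinfun_eqI)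
  then have "blinfun_apply (kappa a) x \<noteq> blinfun_apply (kappa a) y" by (simp add: kappa_apply)
  moreover have "blinfun_apply (kappa a) \<in> range blinfun_apply" by (rule rangeI)
  ultimately show "\<exists>g::('a \<Rightarrow>\<^sub>L real) \<Rightarrow> real\<in>range blinfun_apply. g x \<noteq> g y" by (rule rev_bexI[rotated])
qed simp

definition Wst :: "('a::real_normed_vector \<Rightarrow>\<^sub>L real) topology" where
  "Wst = weak_top (range (\<lambda>a \<mu>. blinfun_apply \<mu> a))"

lemma topspace_Wst [simp]: "topspace Wst = UNIV"
  unfolding Wst_def by (rule topspace_weak_top) simp

lemma hausdorff_Wst: "Hausdorff_space Wst"
  unfolding Wst_def
proof (rule hausdorff_weak_top)
  fix x y :: "'a \<Rightarrow>\<^sub>L real" assume "x \<noteq> y"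
  then obtain a where "x a \<noteq> y a" by (meson blinfun_eqI)
  then show "\<exists>g\<in>range (\<lambda>a \<mu>. blinfun_apply \<mu> a). g x \<noteq> g y" by auto
qed simp

lemma cont_full_Wst: "continuous_map weak_top_full Wst (\<lambda>x. x)"
  unfolding Wst_def
proof (rule cont_into_weak_top)
  fix g assume "g \<in> range (\<lambda>a (\<mu>::'a \<Rightarrow>\<^sub>L real). blinfun_apply \<mu> a)"
  then obtain a where g: "g = (\<lambda>\<mu>. blinfun_apply \<mu> a)" by blast
  have "g \<circ> (\<lambda>x. x) = blinfun_apply (kappa a)" by (simp add: g kappa_apply comp_def)
  then show "continuous_map weak_top_full euclideanreal (g \<circ> (\<lambda>x. x))"
    unfolding weak_top_full_def
    using cont_weak_top_gen[OF rangeI[of blinfun_apply "kappa a"]] by simp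
qed simp

lemma dba_subspace: "dual_banach_algebra P \<Longrightarrow> subspace P"
  and dba_closed: "dual_banach_algebra P \<Longrightarrow> closed P"
  by (simp_all add: dual_banach_algebra_def)

lemma dba_repr:
  fixes P :: "('a::{real_normed_algebra,banach} \<Rightarrow>\<^sub>L real) set"
    and \<Psi> :: "('a \<Rightarrow>\<^sub>L real) \<Rightarrow>\<^sub>L real"
  assumes "dual_banach_algebra P"
  shows "\<exists>a. \<forall>\<mu>\<in>P. \<Psi> \<mu> = \<mu> a"
proof -
  have "\<forall>\<phi> :: ('a \<Rightarrow>\<^sub>L real) \<Rightarrow> real.
        (\<forall>x\<in>P. \<forall>y\<in>P. \<phi> (x + y) = \<phi> x + \<phi> y) \<and>
        (\<forall>c. \<forall>x\<in>P. \<phi> (c *\<^sub>R x) = c * \<phi> x) \<and>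
        (\<exists>K. \<forall>x\<in>P. \<bar>\<phi> x\<bar> \<le> K * norm x)
        \<longrightarrow> (\<exists>a. \<forall>\<mu>\<in>P. \<phi> \<mu> = blinfun_apply \<mu> a)"
    using assms by (simp add: dual_banach_algebra_def)
  from this[rule_format, of "blinfun_apply \<Psi>"] show ?thesis
    using norm_blinfun[of \<Psi>]
    by (auto simp: blinfun.add_right blinfun.scaleR_right intro!: exI[of _ "norm \<Psi>"])
qed

lemma weakstar_cont_in_P:
  fixes P :: "('a::{real_normed_algebra,banach} \<Rightarrow>\<^sub>L real) set" and h :: "'a \<Rightarrow>\<^sub>L real"
  assumes dba: "dual_banach_algebra P"
    and cont: "continuous_map (weak_star_A P) euclideanreal (blinfun_apply h)"
  shows "h \<in> P"
proof -
  have sP: "subspace P" using dba by (rule dba_subspace)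
  have ne: "blinfun_apply ` P \<noteq> {}" using subspace_0[OF sP] by blast
  have ts: "topspace (weak_star_A P) = UNIV" unfolding weak_star_A_def by (rule topspace_weak_top[OF ne])
  have "openin (weak_star_A P) {x \<in> topspace (weak_star_A P). blinfun_apply h x \<in> {-1<..<1}}"
    by (rule openin_continuous_map_preimage[OF cont]) simp
  moreover have "{x \<in> topspace (weak_star_A P). blinfun_apply h x \<in> {-1<..<1}} = {x. \<bar>h x\<bar> < 1}"
    by (auto simp: ts abs_less_iff)
  ultimately have op: "openin (weak_top (blinfun_apply ` P)) {x. \<bar>h x\<bar> < 1}"
    by (simp add: weak_star_A_def)
  obtain Fs e where Fs: "finite Fs" "Fs \<subseteq> blinfun_apply ` P" "e > 0"
    "{y. \<forall>g\<in>Fs. \<bar>g y - g 0\<bar> < e} \<subseteq> {x. \<bar>h x\<bar> < 1}"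
    using weak_top_basic_nbhd[OF op, of 0] by auto
  obtain Pf where Pf: "Pf \<subseteq> P" "finite Pf" "Fs = blinfun_apply ` Pf"
    using finite_subset_image[OF Fs(1,2)] by blast
  have "h \<in> span Pf"
  proof (rule kernel_span[OF Pf(2)])
    fix x assume x: "\<forall>\<mu>\<in>Pf. \<mu> x = 0"
    show "h x = 0"
    proof (rule ccontr)
      assume hx: "h x \<noteq> 0"
      define n where "n = 2 / \<bar>h x\<bar>"
      have "n *\<^sub>R x \<in> {y. \<forall>g\<in>Fs. \<bar>g y - g 0\<bar> < e}"
        using x Fs(3) by (auto simp: Pf(3) blinfun.scaleR_right)
      then have "\<bar>h (n *\<^sub>R x)\<bar> < 1" using Fs(4) by blast
      moreover have "\<bar>h (n *\<^sub>R x)\<bar> = 2" using hx by (simp add: n_def blinfun.scaleR_right abs_mult)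
      ultimately show False by simp
    qed
  qed
  then show ?thesis using span_minimal[OF Pf(1) sP] by blast
qed

lemma kappa_linear: "linear (kappa :: 'a::real_normed_vector \<Rightarrow> _)"
proof (rule linearI)
  fix x y :: 'a show "kappa (x + y) = kappa x + kappa y"
    by (rule blinfun_eqI) (simp add: kappa_apply blinfun.add_right blinfun.add_left)
next
  fix c and x :: 'a show "kappa (c *\<^sub>R x) = c *\<^sub>R kappa x"
    by (rule blinfun_eqI) (simp add: kappa_apply blinfun.scaleR_right blinfun.scaleR_left)
qed

lemma goldstine_step:
  fixes C :: "('a::real_normed_vector \<Rightarrow>\<^sub>L real) set" and G0 :: "'a \<Rightarrow>\<^sub>L real"
  assumes cC: "convex C" and C0: "0 \<in> C"
    and hyp: "\<And>a. (\<forall>c\<in>C. c a \<le> 1) \<Longrightarrow> G0 a < 1"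
  shows "G0 \<in> Wst closure_of C"
  unfolding in_closure_of topspace_Wst
proof (intro conjI allI impI UNIV_I)
  fix T assume "G0 \<in> T \<and> openin Wst T"
  then have G0T: "G0 \<in> T" and oT: "openin (weak_top (range (\<lambda>a \<mu>. blinfun_apply \<mu> a))) T"
    by (auto simp: Wst_def)
  obtain Fs e where Fs: "finite Fs" "Fs \<subseteq> range (\<lambda>a \<mu>. blinfun_apply \<mu> a)" "e > 0"
    "{y. \<forall>g\<in>Fs. \<bar>g y - g G0\<bar> < e} \<subseteq> T"
    using weak_top_basic_nbhd[OF oT G0T] by blast
  obtain Af where Af: "finite Af" "Fs = (\<lambda>a \<mu>. blinfun_apply \<mu> a) ` Af"
    using finite_subset_image[OF Fs(1,2)] by blast
  have nbhd: "{y::'a \<Rightarrow>\<^sub>L real. \<forall>a\<in>Af. \<bar>y a - G0 a\<bar> < e} \<subseteq> T" using Fs(4) Af(2) by auto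
  show "\<exists>y. y \<in> C \<and> y \<in> T"
  proof (rule ccontr)
    assume "\<not> (\<exists>y. y \<in> C \<and> y \<in> T)"
    then have far: "\<And>c. c \<in> C \<Longrightarrow> \<exists>a\<in>Af. \<bar>c a - G0 a\<bar> \<ge> e" using nbhd by force
    define \<nu> where "\<nu> g = (\<Sum>a\<in>Af. \<bar>blinfun_apply g a\<bar>) / e" for g :: "'a \<Rightarrow>\<^sub>L real"
    have \<nu>_nn: "\<nu> g \<ge> 0" for g using Fs(3) by (simp add: \<nu>_def sum_nonneg)
    have \<nu>_add: "\<nu> (g + h) \<le> \<nu> g + \<nu> h" for g h
    proof -
      have "(\<Sum>a\<in>Af. \<bar>blinfun_apply (g + h) a\<bar>) \<le> (\<Sum>a\<in>Af. \<bar>g a\<bar> + \<bar>h a\<bar>)"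
        by (rule sum_mono) (simp add: blinfun.add_left abs_triangle_ineq)
      then show ?thesis using Fs(3) by (simp add: \<nu>_def sum.distrib add_divide_distrib[symmetric] divide_right_mono)
    qed
    have \<nu>_scale: "\<nu> (r *\<^sub>R g) = \<bar>r\<bar> * \<nu> g" for r g
      by (simp add: \<nu>_def blinfun.scaleR_left abs_mult sum_distrib_left[symmetric])
    have \<nu>_neg: "\<nu> (- g) = \<nu> g" for g using \<nu>_scale[of "-1" g] by simp
    have \<nu>_far: "\<nu> (G0 - c) \<ge> 1" if cin: "c \<in> C" for c
    proof -
      obtain a where a: "a \<in> Af" "\<bar>c a - G0 a\<bar> \<ge> e" using far[OF cin] by blast
      have "\<bar>blinfun_apply (G0 - c) a\<bar> \<le> (\<Sum>a\<in>Af. \<bar>blinfun_apply (G0 - c) a\<bar>)"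
        by (rule member_le_sum) (use a Af in auto)
      moreover have "\<bar>blinfun_apply (G0 - c) a\<bar> = \<bar>c a - G0 a\<bar>" by (simp add: blinfun.diff_left)
      ultimately have "e \<le> (\<Sum>a\<in>Af. \<bar>blinfun_apply (G0 - c) a\<bar>)" using a by simp
      then show ?thesis using Fs(3) by (simp add: \<nu>_def)
    qed
    define Z where "Z g = {t + \<nu> (g - t *\<^sub>R c) | t c. t \<ge> 0 \<and> c \<in> C}" for g
    define p where "p g = Inf (Z g)" for g
    have Zne: "Z g \<noteq> {}" for g using C0 by (auto simp: Z_def)
    have Zbdd: "bdd_below (Z g)" for g
      by (rule bdd_belowI[where m=0]) (auto simp: Z_def intro!: add_nonneg_nonneg \<nu>_nn)
    have p_le: "p g \<le> t + \<nu> (g - t *\<^sub>R c)" if "t \<ge> 0" "c \<in> C" for g t c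
      unfolding p_def by (rule cInf_lower[OF _ Zbdd]) (use that in \<open>auto simp: Z_def\<close>)
    have p_ge: "r \<le> p g" if "\<And>t c. t \<ge> 0 \<Longrightarrow> c \<in> C \<Longrightarrow> r \<le> t + \<nu> (g - t *\<^sub>R c)" for r g
      unfolding p_def by (rule cInf_greatest[OF Zne]) (use that in \<open>auto simp: Z_def\<close>)
    have p_nn: "p g \<ge> 0" for g by (rule p_ge) (simp add: \<nu>_nn)
    have p_nu: "p g \<le> \<nu> g" for g using p_le[of 0 0 g] C0 by simp
    have p0: "p 0 = 0" using p_nu[of 0] p_nn[of 0] \<nu>_scale[of 0 0] by simp
    have sub: "p (x + y) \<le> p x + p y" for x y
    proof -
      have core: "p (x + y) \<le> (t1 + \<nu> (x - t1 *\<^sub>R c1)) + (t2 + \<nu> (y - t2 *\<^sub>R c2))"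
        if t1: "t1 \<ge> 0" "c1 \<in> C" and t2: "t2 \<ge> 0" "c2 \<in> C" for t1 c1 t2 c2
      proof -
        obtain c where c: "c \<in> C" "(t1 + t2) *\<^sub>R c = t1 *\<^sub>R c1 + t2 *\<^sub>R c2"
        proof (cases "t1 + t2 = 0")
          case True
          then have "t1 = 0" "t2 = 0" using t1 t2 by auto
          then show ?thesis using that[of c1] t1 by simp
        next
          case False
          then have tp: "t1 + t2 > 0" using t1 t2 by simp
          define c where "c = (t1 / (t1 + t2)) *\<^sub>R c1 + (t2 / (t1 + t2)) *\<^sub>R c2"
          have "c \<in> C" unfolding c_def
            by (rule convexD[OF cC t1(2) t2(2)]) (use tp t1 t2 in \<open>auto simp: add_divide_distrib[symmetric]\<close>)
          moreover have "(t1 + t2) *\<^sub>R c = t1 *\<^sub>R c1 + t2 *\<^sub>R c2"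
            using tp by (simp add: c_def scaleR_add_right)
          ultimately show ?thesis by (rule that)
        qed
        have "p (x + y) \<le> (t1 + t2) + \<nu> ((x + y) - (t1 + t2) *\<^sub>R c)"
          by (rule p_le) (use t1 t2 c in auto)
        also have "(x + y) - (t1 + t2) *\<^sub>R c = (x - t1 *\<^sub>R c1) + (y - t2 *\<^sub>R c2)"
          using c(2) by (simp add: algebra_simps)
        also have "\<nu> \<dots> \<le> \<nu> (x - t1 *\<^sub>R c1) + \<nu> (y - t2 *\<^sub>R c2)" by (rule \<nu>_add)
        finally show ?thesis by simp
      qed
      have "p (x + y) - p x \<le> t2 + \<nu> (y - t2 *\<^sub>R c2)" if "t2 \<ge> 0" "c2 \<in> C" for t2 c2
      proof -
        have "p (x + y) - (t2 + \<nu> (y - t2 *\<^sub>R c2)) \<le> p x"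
          by (rule p_ge) (use core that in force)
        then show ?thesis by simp
      qed
      then have "p (x + y) - p x \<le> p y" by (intro p_ge)
      then show ?thesis by simp
    qed
    have hom: "p (r *\<^sub>R x) = r * p x" if r: "r \<ge> 0" for r x
    proof (cases "r = 0")
      case True then show ?thesis using p0 by simp
    next
      case False
      then have r: "r > 0" using r by simp
      have "p (r *\<^sub>R x) / r \<le> p x"
      proof (rule p_ge)
        fix t :: real and c assume tc: "t \<ge> 0" "c \<in> C"
        have "p (r *\<^sub>R x) \<le> (r * t) + \<nu> (r *\<^sub>R x - (r * t) *\<^sub>R c)" by (rule p_le) (use tc r in auto)
        also have "r *\<^sub>R x - (r * t) *\<^sub>R c = r *\<^sub>R (x - t *\<^sub>R c)" by (simp add: algebra_simps)
        also have "\<nu> \<dots> = r * \<nu> (x - t *\<^sub>R c)" using r by (simp add: \<nu>_scale)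
        finally show "p (r *\<^sub>R x) / r \<le> t + \<nu> (x - t *\<^sub>R c)" using r by (simp add: field_simps)
      qed
      moreover have "r * p x \<le> p (r *\<^sub>R x)"
      proof (rule p_ge)
        fix t :: real and c assume tc: "t \<ge> 0" "c \<in> C"
        have "p x \<le> (t / r) + \<nu> (x - (t / r) *\<^sub>R c)" by (rule p_le) (use tc r in auto)
        also have "x - (t / r) *\<^sub>R c = (1 / r) *\<^sub>R (r *\<^sub>R x - t *\<^sub>R c)" using r by (simp add: algebra_simps)
        also have "\<nu> \<dots> = (1 / r) * \<nu> (r *\<^sub>R x - t *\<^sub>R c)" using r by (simp add: \<nu>_scale)
        finally have "p x \<le> t / r + (1 / r) * \<nu> (r *\<^sub>R x - t *\<^sub>R c)" .
        then have "r * p x \<le> r * (t / r + (1 / r) * \<nu> (r *\<^sub>R x - t *\<^sub>R c))" using r by simp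
        then show "r * p x \<le> t + \<nu> (r *\<^sub>R x - t *\<^sub>R c)" using r by (simp add: algebra_simps)
      qed
      ultimately show ?thesis using r by (simp add: field_simps)
    qed
    have sp: "sublin p" unfolding sublin_def using sub hom by blast
    have pG: "p G0 \<ge> 1"
    proof (rule p_ge)
      fix t :: real and c assume tc: "t \<ge> 0" "c \<in> C"
      show "1 \<le> t + \<nu> (G0 - t *\<^sub>R c)"
      proof (cases "t \<ge> 1")
        case True then show ?thesis using \<nu>_nn[of "G0 - t *\<^sub>R c"] by simp
      next
        case False
        have "t *\<^sub>R c + (1 - t) *\<^sub>R 0 \<in> C" by (rule convexD[OF cC tc(2) C0]) (use tc False in auto)
        then have "\<nu> (G0 - t *\<^sub>R c) \<ge> 1" using \<nu>_far by simp
        then show ?thesis using tc by simp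
      qed
    qed
    have pC: "p c \<le> 1" if "c \<in> C" for c using p_le[of 1 c c] that by (simp add: \<nu>_scale[of 0, simplified])
    have G0nz: "G0 \<noteq> 0" using pG p0 by auto
    define H0 where "H0 = {(s *\<^sub>R G0, s * p G0) | s. True}"
    have gH0: "goodg p H0"
      unfolding goodg_def
    proof (intro conjI allI impI)
      show "subspace H0"
      proof (rule subspaceI)
        have "(0 :: ('a \<Rightarrow>\<^sub>L real) \<times> real) = (0 *\<^sub>R G0, 0 * p G0)" by (simp add: zero_prod_def)
        then show "0 \<in> H0" unfolding H0_def by blast
      next
        fix u v assume "u \<in> H0" "v \<in> H0"
        then obtain s1 s2 where "u = (s1 *\<^sub>R G0, s1 * p G0)" "v = (s2 *\<^sub>R G0, s2 * p G0)" unfolding H0_def by blast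
        then have "u + v = ((s1 + s2) *\<^sub>R G0, (s1 + s2) * p G0)" by (simp add: algebra_simps)
        then show "u + v \<in> H0" unfolding H0_def by blast
      next
        fix r u assume "u \<in> H0"
        then obtain s1 where "u = (s1 *\<^sub>R G0, s1 * p G0)" unfolding H0_def by blast
        then have "r *\<^sub>R u = ((r * s1) *\<^sub>R G0, (r * s1) * p G0)" by simp
        then show "r *\<^sub>R u \<in> H0" unfolding H0_def by blast
      qed
    next
      fix x y z assume "(x, y) \<in> H0" "(x, z) \<in> H0"
      then obtain s1 s2 where "x = s1 *\<^sub>R G0" "y = s1 * p G0" "x = s2 *\<^sub>R G0" "z = s2 * p G0"
        unfolding H0_def by blast
      then have "s1 = s2" using G0nz by (metis scaleR_cancel_right)
      then show "y = z" using \<open>y = s1 * p G0\<close> \<open>z = s2 * p G0\<close> by simp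
    next
      fix x y assume "(x, y) \<in> H0"
      then obtain s where s: "x = s *\<^sub>R G0" "y = s * p G0" unfolding H0_def by blast
      show "y \<le> p x"
      proof (cases "s \<ge> 0")
        case True then show ?thesis using s hom by simp
      next
        case False
        then have "s * p G0 \<le> 0" using pG by (simp add: mult_nonpos_nonneg)
        then show ?thesis using s p_nn[of x] by simp
      qed
    qed
    from hahn_banach_alg[OF sp gH0] obtain f where f: "linear f" "\<forall>x. f x \<le> p x"
      "\<forall>x y. (x, y) \<in> H0 \<longrightarrow> f x = y" by blast
    have fG: "f G0 = p G0" using f(3) unfolding H0_def by (metis (mono_tags, lifting) mem_Collect_eq scaleR_one mult_1)
    have fnu: "\<bar>f g\<bar> \<le> \<nu> g" for g
    proof -
      have "f g \<le> \<nu> g" using f(2) p_nu order_trans by blast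
      moreover have "- f g \<le> \<nu> g" using f(2)[rule_format, of "- g"] p_nu[of "- g"] \<nu>_neg[of g] linear_neg[OF f(1)]
        by simp
      ultimately show ?thesis by simp
    qed
    define K where "K = (\<Sum>a\<in>Af. norm a) / e"
    have fbd: "\<bar>f g\<bar> \<le> K * norm g" for g
    proof -
      have "(\<Sum>a\<in>Af. \<bar>blinfun_apply g a\<bar>) \<le> (\<Sum>a\<in>Af. norm a * norm g)"
        by (rule sum_mono) (metis norm_blinfun mult.commute real_norm_def)
      then have "\<nu> g \<le> K * norm g" using Fs(3)
        by (simp add: \<nu>_def K_def sum_distrib_right[symmetric] divide_right_mono)
      then show ?thesis using fnu[of g] by simp
    qed
    define Fb where "Fb = Blinfun f"
    have Fb: "blinfun_apply Fb = f" unfolding Fb_def by (rule linear_bdd_blinfun[OF f(1) fbd])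
    have "Fb \<in> span (kappa ` Af)"
    proof (rule kernel_span)
      show "finite (kappa ` Af)" using Af(1) by simp
    next
      fix g assume "\<forall>\<mu>\<in>kappa ` Af. blinfun_apply \<mu> g = 0"
      then have "\<forall>a\<in>Af. g a = 0" by (simp add: kappa_apply)
      then have "\<nu> g = 0" by (simp add: \<nu>_def)
      then show "Fb g = 0" using fnu[of g] Fb by simp
    qed
    then have "Fb \<in> kappa ` span Af" by (simp add: linear_span_image[OF kappa_linear])
    then obtain a0 where a0: "Fb = kappa a0" by blast
    have fa: "f g = g a0" for g using Fb a0 kappa_apply by metis
    have "\<forall>c\<in>C. c a0 \<le> 1" using fa f(2) pC by (metis order_trans)
    then have "G0 a0 < 1" by (rule hyp)
    moreover have "G0 a0 \<ge> 1" using fa fG pG by metis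
    ultimately show False by simp
  qed
qed

lemma norm_le_unit:
  fixes f :: "'v::real_normed_vector \<Rightarrow>\<^sub>L 'w::real_normed_vector"
  assumes M: "M \<ge> 0" and H: "\<And>x. norm x \<le> 1 \<Longrightarrow> norm (f x) \<le> M"
  shows "norm f \<le> M"
proof (rule norm_blinfun_bound[OF M])
  fix x
  show "norm (f x) \<le> M * norm x"
  proof (cases "x = 0")
    case True then show ?thesis by (simp add: blinfun.zero_right)
  next
    case False
    define u where "u = x /\<^sub>R norm x"
    have nu: "norm u = 1" using False by (simp add: u_def)
    have "x = norm x *\<^sub>R u" using False by (simp add: u_def)
    then have "f x = norm x *\<^sub>R f u" by (metis blinfun.scaleR_right)
    then have "norm (f x) = norm x * norm (f u)" by simp
    also have "\<dots> \<le> norm x * M" using H[of u] nu by (simp add: mult_left_mono)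
    finally show ?thesis by (simp add: mult.commute)
  qed
qed

lemma normbound2:
  fixes S :: "'a::real_normed_vector \<Rightarrow>\<^sub>L ('a \<Rightarrow>\<^sub>L real)"
  assumes H: "\<And>c b. norm c \<le> 1 \<Longrightarrow> norm b \<le> 1 \<Longrightarrow> \<bar>S b c\<bar> \<le> M"
  shows "norm S \<le> M"
proof -
  have M: "M \<ge> 0" using H[of 0 0] by (simp add: blinfun.zero_right)
  show ?thesis
  proof (rule norm_le_unit[OF M])
    fix b :: 'a assume b: "norm b \<le> 1"
    show "norm (S b) \<le> M"
      by (rule norm_le_unit[OF M]) (use H b in simp)
  qed
qed

lemma abstract_main:
  fixes P :: "('a::{real_normed_algebra,banach} \<Rightarrow>\<^sub>L real) set"
    and L :: "'a \<Rightarrow> ('a \<Rightarrow>\<^sub>L ('a \<Rightarrow>\<^sub>L real))" and B :: "'a \<Rightarrow> 'a \<Rightarrow> ('a \<Rightarrow>\<^sub>L real)"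
  assumes dba: "dual_banach_algebra P" and L: "bounded_linear L"
    and B: "\<And>c b a. B c b a = L a b c"
  shows "continuous_map (weak_star_A P) weak_top_full L \<longleftrightarrow> weakly_compact_bil B \<and> (\<forall>c b. B c b \<in> P)"
proof -
  have sP: "subspace P" using dba by (rule dba_subspace)
  have cP: "closed P" using dba by (rule dba_closed)
  have Pne: "blinfun_apply ` P \<noteq> {}" using subspace_0[OF sP] by blast
  have tsA: "topspace (weak_star_A P) = UNIV" unfolding weak_star_A_def by (rule topspace_weak_top[OF Pne])
  define G where "G \<psi> = Blinfun (\<lambda>a. blinfun_apply \<psi> (L a))" for \<psi> :: "('a \<Rightarrow>\<^sub>L ('a \<Rightarrow>\<^sub>L real)) \<Rightarrow>\<^sub>L real"
  have G_apply: "blinfun_apply (G \<psi>) = (\<lambda>a. \<psi> (L a))" for \<psi>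
    unfolding G_def by (rule bounded_linear_Blinfun_apply, rule bounded_linear_compose[OF blinfun.bounded_linear_right L])
  define ev where "ev c b = Blinfun (\<lambda>S :: 'a \<Rightarrow>\<^sub>L ('a \<Rightarrow>\<^sub>L real). blinfun_apply (blinfun_apply S b) c)" for c b :: 'a
  have ev_apply: "blinfun_apply (ev c b) = (\<lambda>S. S b c)" for c b
    unfolding ev_def
    by (rule bounded_linear_Blinfun_apply,
        rule bounded_linear_compose[OF blinfun.bounded_linear_left blinfun.bounded_linear_left])
  have norm_ev: "norm (ev c b) \<le> 1" if "norm c \<le> 1" "norm b \<le> 1" for c b
  proof (rule norm_blinfun_bound)
    fix S :: "'a \<Rightarrow>\<^sub>L ('a \<Rightarrow>\<^sub>L real)"
    have "norm (S b c) \<le> norm (S b) * norm c" by (rule norm_blinfun)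
    also have "\<dots> \<le> norm (S b)" using that by (simp add: mult_left_le)
    also have "\<dots> \<le> norm S * norm b" by (rule norm_blinfun)
    also have "\<dots> \<le> norm S" using that by (simp add: mult_left_le)
    finally show "norm (blinfun_apply (ev c b) S) \<le> 1 * norm S" by (simp add: ev_apply)
  qed simp
  have B_G: "B c b = G (ev c b)" for c b
    by (rule blinfun_eqI) (simp add: B G_apply ev_apply)
  have G_add: "G (x + y) = G x + G y" for x y
    by (rule blinfun_eqI) (simp add: G_apply blinfun.add_left)
  have G_scale: "G (r *\<^sub>R x) = r *\<^sub>R G x" for r x
    by (rule blinfun_eqI) (simp add: G_apply blinfun.scaleR_left)
  have G_neg: "G (- x) = - G x" for x using G_scale[of "-1" x] by simp
  have G_zero: "G 0 = 0" using G_scale[of 0 0] by simp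
  have stepA: "continuous_map (weak_star_A P) weak_top_full L \<longleftrightarrow> (\<forall>\<psi>. G \<psi> \<in> P)"
  proof
    assume cont: "continuous_map (weak_star_A P) weak_top_full L"
    show "\<forall>\<psi>. G \<psi> \<in> P"
    proof
      fix \<psi> :: "('a \<Rightarrow>\<^sub>L ('a \<Rightarrow>\<^sub>L real)) \<Rightarrow>\<^sub>L real"
      have "continuous_map weak_top_full euclideanreal (blinfun_apply \<psi>)"
        unfolding weak_top_full_def by (rule cont_weak_top_gen) simp
      then have "continuous_map (weak_star_A P) euclideanreal (blinfun_apply \<psi> \<circ> L)"
        by (rule continuous_map_compose[OF cont])
      then have "continuous_map (weak_star_A P) euclideanreal (blinfun_apply (G \<psi>))"
        by (simp add: G_apply comp_def)
      then show "G \<psi> \<in> P" by (rule weakstar_cont_in_P[OF dba])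
    qed
  next
    assume all: "\<forall>\<psi>. G \<psi> \<in> P"
    show "continuous_map (weak_star_A P) weak_top_full L"
      unfolding weak_top_full_def
    proof (rule cont_into_weak_top)
      fix g :: "('a \<Rightarrow>\<^sub>L ('a \<Rightarrow>\<^sub>L real)) \<Rightarrow> real" assume "g \<in> range blinfun_apply"
      then obtain \<psi> where g: "g = blinfun_apply \<psi>" by blast
      have "g \<circ> L = blinfun_apply (G \<psi>)" by (simp add: g G_apply comp_def)
      moreover have "continuous_map (weak_star_A P) euclideanreal (blinfun_apply (G \<psi>))"
        unfolding weak_star_A_def by (rule cont_weak_top_gen) (use all in blast)
      ultimately show "continuous_map (weak_star_A P) euclideanreal (g \<circ> L)" by simp
    qed simp
  qed
  define S0 where "S0 = {B a b | a b. norm a \<le> 1 \<and> norm b \<le> 1}"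
  define C where "C = convex hull (S0 \<union> uminus ` S0)"
  have wcb: "weakly_compact_bil B \<longleftrightarrow> compactin weak_top_full (weak_top_full closure_of C)"
    by (simp add: weakly_compact_bil_def S0_def C_def Let_def)
  have S0_S: "B c b \<in> S0" if "norm c \<le> 1" "norm b \<le> 1" for c b
    using that unfolding S0_def by blast
  have S0_C: "B c b \<in> C" "- B c b \<in> C" if "norm c \<le> 1" "norm b \<le> 1" for c b
  proof -
    show "B c b \<in> C" unfolding C_def by (rule hull_inc) (use S0_S[OF that] in blast)
    show "- B c b \<in> C" unfolding C_def by (rule hull_inc) (use S0_S[OF that] in blast)
  qed
  show ?thesis
  proof
    assume cont: "continuous_map (weak_star_A P) weak_top_full L"
    then have all: "\<forall>\<psi>. G \<psi> \<in> P" using stepA by blast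
    have inP: "\<forall>c b. B c b \<in> P" using all B_G by metis
    define Ball1 where "Ball1 = {\<psi> :: ('a \<Rightarrow>\<^sub>L ('a \<Rightarrow>\<^sub>L real)) \<Rightarrow>\<^sub>L real. norm \<psi> \<le> 1}"
    define M where "M = G ` Ball1"
    have contG: "continuous_map (weak_top (range (\<lambda>y (\<psi>::('a \<Rightarrow>\<^sub>L ('a \<Rightarrow>\<^sub>L real)) \<Rightarrow>\<^sub>L real). blinfun_apply \<psi> y)))
                   weak_top_full G"
      unfolding weak_top_full_def
    proof (rule cont_into_weak_top)
      fix g :: "('a \<Rightarrow>\<^sub>L real) \<Rightarrow> real" assume "g \<in> range blinfun_apply"
      then obtain \<Psi> where g: "g = blinfun_apply \<Psi>" by blast
      obtain a where a: "\<forall>\<mu>\<in>P. \<Psi> \<mu> = \<mu> a" using dba_repr[OF dba, of \<Psi>] by blast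
      have "g \<circ> G = (\<lambda>\<psi>. blinfun_apply \<psi> (L a))"
        using a all by (auto simp: g G_apply comp_def)
      then show "continuous_map (weak_top (range (\<lambda>y (\<psi>::('a \<Rightarrow>\<^sub>L ('a \<Rightarrow>\<^sub>L real)) \<Rightarrow>\<^sub>L real). blinfun_apply \<psi> y))) euclideanreal (g \<circ> G)"
        using cont_weak_top_gen[OF rangeI[of "\<lambda>y (\<psi>::('a \<Rightarrow>\<^sub>L ('a \<Rightarrow>\<^sub>L real)) \<Rightarrow>\<^sub>L real). blinfun_apply \<psi> y" "L a"]] by simp
    qed simp
    have cM: "compactin weak_top_full M"
      unfolding M_def Ball1_def by (rule image_compactin[OF alaoglu contG])
    have clM: "closedin weak_top_full M"
      by (rule compactin_imp_closedin[OF hausdorff_weak_top_full_dual cM])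
    have convM: "convex M"
    proof (rule convexI)
      fix x y and u v :: real assume xy: "x \<in> M" "y \<in> M" and uv: "0 \<le> u" "0 \<le> v" "u + v = 1"
      then obtain \<psi>1 \<psi>2 where p: "x = G \<psi>1" "y = G \<psi>2" "norm \<psi>1 \<le> 1" "norm \<psi>2 \<le> 1"
        unfolding M_def Ball1_def by blast
      have "norm (u *\<^sub>R \<psi>1 + v *\<^sub>R \<psi>2) \<le> u * norm \<psi>1 + v * norm \<psi>2"
        using norm_triangle_ineq[of "u *\<^sub>R \<psi>1" "v *\<^sub>R \<psi>2"] uv by simp
      also have "\<dots> \<le> u * 1 + v * 1" using p uv by (intro add_mono mult_left_mono) auto
      finally have "u *\<^sub>R \<psi>1 + v *\<^sub>R \<psi>2 \<in> Ball1" using uv by (simp add: Ball1_def)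
      moreover have "u *\<^sub>R x + v *\<^sub>R y = G (u *\<^sub>R \<psi>1 + v *\<^sub>R \<psi>2)" using p by (simp add: G_add G_scale)
      ultimately show "u *\<^sub>R x + v *\<^sub>R y \<in> M" unfolding M_def by blast
    qed
    have "S0 \<union> uminus ` S0 \<subseteq> M"
    proof -
      have "B c b \<in> M" "- B c b \<in> M" if "norm c \<le> 1" "norm b \<le> 1" for c b
      proof -
        have e1: "ev c b \<in> Ball1" using norm_ev[OF that] by (simp add: Ball1_def)
        moreover have "- ev c b \<in> Ball1" using norm_ev[OF that] by (simp add: Ball1_def)
        have "B c b = G (ev c b)" "- B c b = G (- ev c b)" using B_G G_neg by simp_all
        then show "B c b \<in> M" "- B c b \<in> M" unfolding M_def using e1 \<open>- ev c b \<in> Ball1\<close>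
          by (auto intro: image_eqI)
      qed
      then show ?thesis unfolding S0_def by blast
    qed
    then have CM: "C \<subseteq> M" unfolding C_def using convM by (rule hull_minimal)
    have clC: "weak_top_full closure_of C \<subseteq> M" by (rule closure_of_minimal[OF CM clM])
    have "compactin weak_top_full (weak_top_full closure_of C)"
      by (rule closed_compactin[OF cM clC]) simp
    then show "weakly_compact_bil B \<and> (\<forall>c b. B c b \<in> P)" using wcb inP by simp
  next
    assume hyp: "weakly_compact_bil B \<and> (\<forall>c b. B c b \<in> P)"
    then have cK: "compactin weak_top_full (weak_top_full closure_of C)" and inP: "\<forall>c b. B c b \<in> P"
      using wcb by auto
    define K where "K = weak_top_full closure_of C"
    have "S0 \<union> uminus ` S0 \<subseteq> P" using inP subspace_neg[OF sP] unfolding S0_def by auto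
    then have CP: "C \<subseteq> P" unfolding C_def using subspace_imp_convex[OF sP] by (rule hull_minimal)
    have KP: "K \<subseteq> P" unfolding K_def by (rule closure_of_minimal[OF CP mazur[OF sP cP]])
    have CK: "C \<subseteq> K" unfolding K_def by (rule closure_of_subset) simp
    have cKW: "compactin Wst K"
      using image_compactin[OF cK[folded K_def] cont_full_Wst] by simp
    have clKW: "closedin Wst K" by (rule compactin_imp_closedin[OF hausdorff_Wst cKW])
    have convC: "convex C" unfolding C_def by (rule convex_convex_hull)
    have C0: "0 \<in> C"
    proof -
      have "B 0 0 \<in> C" "- B 0 0 \<in> C" using S0_C[of 0 0] by auto
      from convexD[OF convC this, of "1/2" "1/2"] show ?thesis by (simp add: scaleR_right_distrib[symmetric])
    qed
    have half: "G \<psi> \<in> P" if n: "norm \<psi> \<le> 1/2" for \<psi>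
    proof -
      have "G \<psi> \<in> Wst closure_of C"
      proof (rule goldstine_step[OF convC C0])
        fix a assume ca: "\<forall>c\<in>C. c a \<le> 1"
        have "\<bar>L a b c\<bar> \<le> 1" if "norm c \<le> 1" "norm b \<le> 1" for c b
        proof -
          have "B c b a \<le> 1" using ca S0_C(1)[OF that] by blast
          moreover have "blinfun_apply (- B c b) a \<le> 1" using ca S0_C(2)[OF that] by blast
          then have "- B c b a \<le> 1" by (simp add: blinfun.minus_left)
          ultimately show ?thesis using B by (simp add: abs_le_iff)
        qed
        then have "norm (L a) \<le> 1" by (intro normbound2) auto
        have "G \<psi> a = \<psi> (L a)" by (simp add: G_apply)
        also have "\<dots> \<le> norm \<psi> * norm (L a)" using norm_blinfun[of \<psi> "L a"] by simp
        also have "\<dots> \<le> 1/2 * 1" using n \<open>norm (L a) \<le> 1\<close> by (intro mult_mono) auto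
        finally show "G \<psi> a < 1" by simp
      qed
      then have "G \<psi> \<in> K" using closure_of_minimal[OF CK clKW] by blast
      then show ?thesis using KP by blast
    qed
    have "\<forall>\<psi>. G \<psi> \<in> P"
    proof
      fix \<psi> :: "('a \<Rightarrow>\<^sub>L ('a \<Rightarrow>\<^sub>L real)) \<Rightarrow>\<^sub>L real"
      show "G \<psi> \<in> P"
      proof (cases "\<psi> = 0")
        case True then show ?thesis using G_zero subspace_0[OF sP] by simp
      next
        case False
        define \<psi>' where "\<psi>' = (1 / (2 * norm \<psi>)) *\<^sub>R \<psi>"
        have "norm \<psi>' \<le> 1/2" using False by (simp add: \<psi>'_def)
        then have "G \<psi>' \<in> P" by (rule half)
        then have "(2 * norm \<psi>) *\<^sub>R G \<psi>' \<in> P" by (rule subspace_scale[OF sP])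
        moreover have "(2 * norm \<psi>) *\<^sub>R G \<psi>' = G \<psi>" using False by (simp add: \<psi>'_def G_scale)
        ultimately show ?thesis by simp
      qed
    qed
    then show "continuous_map (weak_star_A P) weak_top_full L" using stepA by blast
  qed
qed

lemma lact_dual_apply: "blinfun_apply (lact_dual a \<mu>) b = \<mu> (b * a)"
  unfolding lact_dual_def
  by (subst bounded_linear_Blinfun_apply)
     (rule bounded_linear_compose[OF blinfun.bounded_linear_right bounded_linear_mult_left], simp)

lemma ract_dual_apply: "blinfun_apply (ract_dual \<mu> a) b = \<mu> (a * b)"
  unfolding ract_dual_def
  by (subst bounded_linear_Blinfun_apply)
     (rule bounded_linear_compose[OF blinfun.bounded_linear_right bounded_linear_mult_right], simp)

lemma lact_op_apply: "blinfun_apply (lact_op a T) c = T (c * a)"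
  unfolding lact_op_def
  by (subst bounded_linear_Blinfun_apply)
     (rule bounded_linear_compose[OF blinfun.bounded_linear_right bounded_linear_mult_left], simp)

lemma ract_dual_norm: "norm (ract_dual \<mu> a) \<le> norm \<mu> * norm a"
proof (rule norm_blinfun_bound)
  fix b
  have "norm (\<mu> (a * b)) \<le> norm \<mu> * norm (a * b)" by (rule norm_blinfun)
  also have "\<dots> \<le> norm \<mu> * (norm a * norm b)" by (intro mult_left_mono norm_mult_ineq) simp
  finally show "norm (blinfun_apply (ract_dual \<mu> a) b) \<le> norm \<mu> * norm a * norm b"
    by (simp add: ract_dual_apply mult.assoc)
qed simp

lemma ract_op_bl: "bounded_linear (\<lambda>c. ract_dual (blinfun_apply T c) a)"
proof (rule bounded_linear_intro[where K="norm T * norm a"])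
  fix x y show "ract_dual (T (x + y)) a = ract_dual (T x) a + ract_dual (T y) a"
    by (rule blinfun_eqI) (simp add: ract_dual_apply blinfun.add_right blinfun.add_left)
next
  fix r x show "ract_dual (T (r *\<^sub>R x)) a = r *\<^sub>R ract_dual (T x) a"
    by (rule blinfun_eqI) (simp add: ract_dual_apply blinfun.scaleR_right blinfun.scaleR_left)
next
  fix x
  have "norm (ract_dual (T x) a) \<le> norm (T x) * norm a" by (rule ract_dual_norm)
  also have "\<dots> \<le> norm T * norm x * norm a" by (intro mult_right_mono norm_blinfun) simp
  finally show "norm (ract_dual (T x) a) \<le> norm x * (norm T * norm a)" by (simp add: ac_simps)
qed

lemma ract_op_apply: "blinfun_apply (ract_op T a) c = ract_dual (T c) a"
  unfolding ract_op_def by (simp add: bounded_linear_Blinfun_apply[OF ract_op_bl])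

lemma lact_op_bl:
  fixes T :: "'a::real_normed_algebra \<Rightarrow>\<^sub>L ('a \<Rightarrow>\<^sub>L real)"
  shows "bounded_linear (\<lambda>a. lact_op a T)"
proof (rule bounded_linear_intro[where K="norm T"])
  fix x y :: 'a show "lact_op (x + y) T = lact_op x T + lact_op y T"
    by (rule blinfun_eqI) (simp add: lact_op_apply distrib_left blinfun.add_right blinfun.add_left)
next
  fix r and x :: 'a show "lact_op (r *\<^sub>R x) T = r *\<^sub>R lact_op x T"
    by (rule blinfun_eqI) (simp add: lact_op_apply blinfun.scaleR_right blinfun.scaleR_left)
next
  fix x :: 'a
  have "norm (lact_op x T) \<le> norm T * norm x"
  proof (rule norm_blinfun_bound)
    fix c
    have "norm (T (c * x)) \<le> norm T * norm (c * x)" by (rule norm_blinfun)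
    also have "\<dots> \<le> norm T * (norm c * norm x)" by (intro mult_left_mono norm_mult_ineq) simp
    finally show "norm (blinfun_apply (lact_op x T) c) \<le> norm T * norm x * norm c"
      by (simp add: lact_op_apply ac_simps)
  qed simp
  then show "norm (lact_op x T) \<le> norm x * norm T" by (simp add: mult.commute)
qed

lemma ract_op_bl2:
  fixes T :: "'a::real_normed_algebra \<Rightarrow>\<^sub>L ('a \<Rightarrow>\<^sub>L real)"
  shows "bounded_linear (\<lambda>a. ract_op T a)"
proof (rule bounded_linear_intro[where K="norm T"])
  fix x y :: 'a show "ract_op T (x + y) = ract_op T x + ract_op T y"
    by (intro blinfun_eqI) (simp add: ract_op_apply ract_dual_apply distrib_right blinfun.add_right blinfun.add_left)
next
  fix r and x :: 'a show "ract_op T (r *\<^sub>R x) = r *\<^sub>R ract_op T x"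
    by (intro blinfun_eqI) (simp add: ract_op_apply ract_dual_apply blinfun.scaleR_right blinfun.scaleR_left)
next
  fix x :: 'a
  have "norm (ract_op T x) \<le> norm T * norm x"
  proof (rule norm_blinfun_bound)
    fix c
    have "norm (ract_dual (T c) x) \<le> norm (T c) * norm x" by (rule ract_dual_norm)
    also have "\<dots> \<le> norm T * norm c * norm x" by (intro mult_right_mono norm_blinfun) simp
    finally show "norm (blinfun_apply (ract_op T x) c) \<le> norm T * norm x * norm c"
      by (simp add: ract_op_apply ac_simps)
  qed simp
  then show "norm (ract_op T x) \<le> norm x * norm T" by (simp add: mult.commute)
qed

lemma phi_r_apply: "blinfun_apply (phi_r T c b) a = T (b * a) c"
  by (simp add: phi_r_def ract_dual_apply adjoint_op_def kappa_apply)

lemma phi_l_apply: "blinfun_apply (phi_l T c b) a = T b (a * c)"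
  by (simp add: phi_l_def lact_dual_apply)

theorem proposition3p2:
  fixes P :: "('a::{real_normed_algebra,banach} \<Rightarrow>\<^sub>L real) set"
    and T :: "'a \<Rightarrow>\<^sub>L ('a \<Rightarrow>\<^sub>L real)"
  assumes "dual_banach_algebra P"
  shows "T \<in> sigmaWC_op P \<longleftrightarrow>
           (weakly_compact_bil (phi_r T) \<and> weakly_compact_bil (phi_l T) \<and>
            (\<forall>a b. phi_r T a b \<in> P) \<and> (\<forall>a b. phi_l T a b \<in> P))"
proof -
  have r: "continuous_map (weak_star_A P) weak_top_full (\<lambda>a. lact_op a T) \<longleftrightarrow>
           weakly_compact_bil (phi_r T) \<and> (\<forall>c b. phi_r T c b \<in> P)"
    by (rule abstract_main[OF assms lact_op_bl]) (simp add: phi_r_apply lact_op_apply)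
  have l: "continuous_map (weak_star_A P) weak_top_full (\<lambda>a. ract_op T a) \<longleftrightarrow>
           weakly_compact_bil (phi_l T) \<and> (\<forall>c b. phi_l T c b \<in> P)"
    by (rule abstract_main[OF assms ract_op_bl2]) (simp add: phi_l_apply ract_op_apply ract_dual_apply)
  show ?thesis unfolding sigmaWC_op_def using r l by blast
qed


end
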